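(* For all integers $v\ge w\ge 2$ and $t\ge 2$ with $w\le\lfloor t^2/4\rfloor+t$, we have $v-w+1\le I_t(w,v)\le v$.
   Context: A $(w,v)$ set system is a pair $(\mathcal{X},\mathcal{B})$ with $|\mathcal{X}|=v$ and $\mathcal{B}$ a family of $w$-element subsets (blocks) of $\mathcal{X}$. For a $w$-subset $T\subseteq\mathcal{X}$ let $P_t(T)=\{\mathcal{P}\subseteq\mathcal{B}: |\mathcal{P}|\le t,\ T\subseteq\bigcup_{B\in\mathcal{P}}B\}$. The set system is a $t$-IPPS$(w,v)$ if for every $w$-subset $T\subseteq\mathcal{X}$, either $P_t(T)=\emptyset$ or $\bigcap_{\mathcal{P}\in P_t(T)}\mathcal{P}\neq\emptyset$. $I_t(w,v)$ denotes the maximum of $|\mathcal{B}|$ over all $t$-IPPS$(w,v)$. *)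

theory Defs
  imports Main
begin

definition Pt :: "nat \<Rightarrow> 'a set set \<Rightarrow> 'a set \<Rightarrow> 'a set set set" where
  "Pt t B T = {P. P \<subseteq> B \<and> card P \<le> t \<and> T \<subseteq> \<Union>P}"

definition set_system :: "nat \<Rightarrow> nat \<Rightarrow> 'a set \<Rightarrow> 'a set set \<Rightarrow> bool" where
  "set_system w v X B \<longleftrightarrow> finite X \<and> card X = v \<and> (\<forall>A\<in>B. A \<subseteq> X \<and> card A = w)"

definition is_IPPS :: "nat \<Rightarrow> nat \<Rightarrow> nat \<Rightarrow> 'a set \<Rightarrow> 'a set set \<Rightarrow> bool" where
  "is_IPPS t w v X B \<longleftrightarrow> set_system w v X B \<and>
     (\<forall>T. T \<subseteq> X \<and> card T = w \<longrightarrow> Pt t B T = {} \<or> \<Inter>(Pt t B T) \<noteq> {})"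

text \<open>I_t(w,v): maximum number of blocks of a t-IPPS(w,v). Point sets are taken
  inside nat without loss of generality (any v-set is in bijection with a subset of nat).\<close>
definition I_t :: "nat \<Rightarrow> nat \<Rightarrow> nat \<Rightarrow> nat" where
  "I_t t w v = Max {card B | (X :: nat set) B. is_IPPS t w v X B}"

end

theory Submission
  imports Defs
begin


lemma viol:
  assumes ipps: "is_IPPS t w v X B" and TX: "T \<subseteq> X" and cT: "card T = w"
    and P: "P \<subseteq> B" "card P \<le> t" "T \<subseteq> \<Union>P"
    and Q: "Q \<subseteq> B" "card Q \<le> t" "T \<subseteq> \<Union>Q"
    and dis: "P \<inter> Q = {}"
  shows False
proof -
  have "P \<in> Pt t B T" "Q \<in> Pt t B T" using P Q by (auto simp: Pt_def)
  moreover have "Pt t B T = {} \<or> \<Inter>(Pt t B T) \<noteq> {}" using ipps TX cT by (auto simp: is_IPPS_def)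
  ultimately obtain D where "D \<in> \<Inter>(Pt t B T)" by blast
  then have "D \<in> P" "D \<in> Q" using \<open>P \<in> Pt t B T\<close> \<open>Q \<in> Pt t B T\<close> by auto
  with dis show False by blast
qed

lemma count_private:
  assumes "finite F" "\<forall>A\<in>F. finite A"
    and "\<forall>G \<subseteq> F. G \<noteq> {} \<longrightarrow> (\<exists>A\<in>G. \<exists>x\<in>A. \<forall>C\<in>G. C \<noteq> A \<longrightarrow> x \<notin> C)"
  shows "card F \<le> card (\<Union>F)"
  using assms
proof (induction "card F" arbitrary: F)
  case 0
  then show ?case by simp
next
  case (Suc n)
  then have "F \<noteq> {}" by auto
  with Suc.prems obtain A x where A: "A \<in> F" "x \<in> A" and nx: "\<forall>C\<in>F. C \<noteq> A \<longrightarrow> x \<notin> C" by blast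
  let ?G = "F - {A}"
  have cG: "n = card ?G" using Suc.hyps(2) A Suc.prems(1) by simp
  have "card ?G \<le> card (\<Union>?G)"
  proof (rule Suc.hyps(1)[OF cG])
    show "finite ?G" "\<forall>A\<in>?G. finite A" using Suc.prems by auto
    show "\<forall>G\<subseteq>?G. G \<noteq> {} \<longrightarrow> (\<exists>A\<in>G. \<exists>x\<in>A. \<forall>C\<in>G. C \<noteq> A \<longrightarrow> x \<notin> C)"
      using Suc.prems(3) by (meson Diff_subset subset_trans)
  qed
  moreover have "\<Union>?G \<subset> \<Union>F" using A nx by blast
  moreover have "finite (\<Union>F)" using Suc.prems by auto
  ultimately have "card ?G < card (\<Union>F)" by (meson le_less_trans psubset_card_mono)
  then show ?case using cG Suc.hyps(2) by simp
qed

lemma sq_div: "(t::nat)^2 div 4 = (t div 2) * (t - t div 2)"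
proof -
  obtain k where "t = 2*k \<or> t = 2*k+1" by (metis oddE evenE)
  then show ?thesis
  proof
    assume "t = 2*k" then show ?thesis by (simp add: power2_eq_square)
  next
    assume h: "t = 2*k+1"
    have "t^2 = 4*(k*k+k) + 1" using h by (simp add: power2_eq_square algebra_simps)
    then have "t^2 div 4 = k*k+k" by simp
    moreover have "t div 2 = k" "t - t div 2 = k+1" using h by auto
    ultimately show ?thesis by (simp add: algebra_simps)
  qed
qed



lemma private_exists:
  assumes ipps: "is_IPPS t w v X B" and t2: "2 \<le> t"
    and wb: "w \<le> t + (t div 2) * (t - t div 2)"
    and sub: "B' \<subseteq> B" and ne: "B' \<noteq> {}"
  shows "\<exists>A\<in>B'. \<exists>x\<in>A. \<forall>C\<in>B'. C \<noteq> A \<longrightarrow> x \<notin> C"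
proof (rule ccontr)
  assume "\<not> ?thesis"
  then have NP: "\<forall>A\<in>B'. \<forall>x\<in>A. \<exists>C\<in>B'. C \<noteq> A \<and> x \<in> C" by blast
  define s where "s = t div 2"
  have s1: "1 \<le> s" and st: "s < t" using t2 by (auto simp: s_def)
  have wb': "w \<le> t + s * (t - s)" using wb by (simp add: s_def)
  have finX: "finite X" and blk: "\<And>A. A \<in> B \<Longrightarrow> A \<subseteq> X \<and> card A = w"
    using ipps by (auto simp: is_IPPS_def set_system_def)
  have finA: "\<And>A. A \<in> B \<Longrightarrow> finite A" using blk finX finite_subset by blast
  define h where "h D y = (SOME C. C \<in> B' \<and> C \<noteq> D \<and> y \<in> C)" for D y
  have hP: "h D y \<in> B' \<and> h D y \<noteq> D \<and> y \<in> h D y" if "D \<in> B'" "y \<in> D" for D y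
    unfolding h_def by (rule someI_ex) (use NP that in blast)
  obtain U where U: "U \<in> B'" using ne by blast
  have UB: "U \<in> B" using U sub by blast
  define g where "g = h U"
  have gP: "\<And>y. y \<in> U \<Longrightarrow> g y \<in> B' \<and> g y \<noteq> U \<and> y \<in> g y" using hP U by (simp add: g_def)
  have finU: "finite U" using finA UB by blast
  show False
  proof (cases "card (g ` U) \<le> t")
    case True
    show False
    proof (rule viol[OF ipps, of U "{U}" "g ` U"])
      show "U \<subseteq> X" "card U = w" using blk UB by auto
      show "{U} \<subseteq> B" "card {U} \<le> t" "U \<subseteq> \<Union>{U}" using UB t2 by auto
      show "g ` U \<subseteq> B" using gP sub by blast
      show "card (g ` U) \<le> t" by fact
      show "U \<subseteq> \<Union>(g ` U)" using gP by blast
      show "{U} \<inter> g ` U = {}" using gP by auto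
    qed
  next
    case False
    then have "s \<le> card (g ` U)" using st by linarith
    then obtain CC where CC: "CC \<subseteq> g ` U" "card CC = s" "finite CC"
      by (rule obtain_subset_with_card_n)
    have CCB': "CC \<subseteq> B'" using CC gP by blast
    have CCB: "CC \<subseteq> B" using CCB' sub by blast
    have UCC: "U \<notin> CC" using CC gP by blast
    have cardUC: "s \<le> card (U \<inter> \<Union>CC)"
    proof -
      have "CC \<subseteq> g ` {y \<in> U. g y \<in> CC}" using CC by blast
      then have "card CC \<le> card (g ` {y \<in> U. g y \<in> CC})" using finU by (intro card_mono) auto
      also have "\<dots> \<le> card {y \<in> U. g y \<in> CC}" using finU by (intro card_image_le) auto
      also have "\<dots> \<le> card (U \<inter> \<Union>CC)" using finU gP by (intro card_mono) auto
      finally show ?thesis using CC by simp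
    qed
    define excl where "excl C = C - (U \<union> \<Union>(CC - {C}))" for C
    show False
    proof (cases "card (U - \<Union>CC) \<le> t - s")
      case True
      show False
      proof (rule viol[OF ipps, of U "{U}" "CC \<union> g ` (U - \<Union>CC)"])
        show "U \<subseteq> X" "card U = w" using blk UB by auto
        show "{U} \<subseteq> B" "card {U} \<le> t" "U \<subseteq> \<Union>{U}" using UB t2 by auto
        show "CC \<union> g ` (U - \<Union>CC) \<subseteq> B" using gP sub CCB by blast
        have "card (CC \<union> g ` (U - \<Union>CC)) \<le> card CC + card (g ` (U - \<Union>CC))" by (rule card_Un_le)
        also have "\<dots> \<le> s + card (U - \<Union>CC)" using CC card_image_le finU by (metis add_le_mono finite_Diff order_refl)
        also have "\<dots> \<le> t" using True st by linarith
        finally show "card (CC \<union> g ` (U - \<Union>CC)) \<le> t" .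
        show "U \<subseteq> \<Union>(CC \<union> g ` (U - \<Union>CC))" using gP by blast
        show "{U} \<inter> (CC \<union> g ` (U - \<Union>CC)) = {}" using gP UCC by auto
      qed
    next
      case notA: False
      show False
      proof (cases "\<exists>C\<in>CC. card (excl C) \<le> t - s")
        case True
        then obtain C where C: "C \<in> CC" "card (excl C) \<le> t - s" by blast
        have CB': "C \<in> B'" using C CCB' by blast
        have CB: "C \<in> B" using CB' sub by blast
        have finC: "finite C" using finA CB by blast
        let ?Q = "insert U (CC - {C}) \<union> h C ` excl C"
        show False
        proof (rule viol[OF ipps, of C "{C}" ?Q])
          show "C \<subseteq> X" "card C = w" using blk CB by auto
          show "{C} \<subseteq> B" "card {C} \<le> t" "C \<subseteq> \<Union>{C}" using CB t2 by auto
          have "h C ` excl C \<subseteq> B'" using hP[OF CB'] by (auto simp: excl_def)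
          then show "?Q \<subseteq> B" using UB CCB sub by blast
          have "card ?Q \<le> card (insert U (CC - {C})) + card (h C ` excl C)" by (rule card_Un_le)
          also have "card (insert U (CC - {C})) \<le> Suc (card (CC - {C}))" using CC by (simp add: card_insert_if)
          also have "card (CC - {C}) = s - 1" using CC C by simp
          also have "card (h C ` excl C) \<le> card (excl C)"
            using finC by (intro card_image_le) (simp add: excl_def)
          finally show "card ?Q \<le> t" using C s1 st by linarith
          show "C \<subseteq> \<Union>?Q"
          proof
            fix y assume y: "y \<in> C"
            show "y \<in> \<Union>?Q"
            proof (cases "y \<in> excl C")
              case True then show ?thesis using hP[OF CB' y] by blast
            next
              case False then show ?thesis using y by (auto simp: excl_def)
            qed
          qed
          have "C \<notin> h C ` excl C"
          proof
            assume "C \<in> h C ` excl C"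
            then obtain y where y: "y \<in> excl C" "C = h C y" by blast
            then have "y \<in> C" by (simp add: excl_def)
            then have "h C y \<noteq> C" using hP[OF CB'] by blast
            then show False using y by simp
          qed
          then show "{C} \<inter> ?Q = {}" using UCC C by auto
        qed
      next
        case notB: False
        then have bigE: "\<And>C. C \<in> CC \<Longrightarrow> t - s \<le> card (excl C)" by force
        have "t - s \<le> card (U - \<Union>CC)" using notA by linarith
        then obtain M where M: "M \<subseteq> U - \<Union>CC" "card M = t - s" "finite M"
          by (rule obtain_subset_with_card_n)
        define L where "L C = (SOME L. L \<subseteq> excl C \<and> card L = t - s)" for C
        have LP: "L C \<subseteq> excl C \<and> card (L C) = t - s" if CinCC: "C \<in> CC" for C
        proof -
          obtain L0 where "L0 \<subseteq> excl C" "card L0 = t - s" "finite L0"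
            by (rule obtain_subset_with_card_n[OF bigE[OF CinCC]])
          then show ?thesis unfolding L_def by (metis (mono_tags, lifting) someI)
        qed
        have finCC: "\<And>C. C \<in> CC \<Longrightarrow> finite C" using CCB finA by blast
        have finL: "\<And>C. C \<in> CC \<Longrightarrow> finite (L C)"
        proof -
          fix C assume "C \<in> CC"
          then have "L C \<subseteq> C" "finite C" using LP finCC by (auto simp: excl_def)
          then show "finite (L C)" by (rule finite_subset)
        qed
        have LsubC: "\<And>C. C \<in> CC \<Longrightarrow> L C \<subseteq> C - U" using LP unfolding excl_def by blast
        have MU: "M \<subseteq> U" "M \<inter> \<Union>CC = {}" using M by auto
        define T0 where "T0 = (U \<inter> \<Union>CC) \<union> M \<union> \<Union>(L ` CC)"
        have cardL: "card (\<Union>(L ` CC)) = s * (t - s)"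
        proof -
          have "card (\<Union>(L ` CC)) = (\<Sum>C\<in>CC. card (L C))"
          proof (rule card_UN_disjoint)
            show "finite CC" by fact
            show "\<forall>i\<in>CC. finite (L i)" using finL by blast
            show "\<forall>i\<in>CC. \<forall>j\<in>CC. i \<noteq> j \<longrightarrow> L i \<inter> L j = {}"
            proof (intro ballI impI)
              fix i j assume ij: "i \<in> CC" "j \<in> CC" "i \<noteq> j"
              have "excl i \<inter> excl j = {}" using ij by (auto simp: excl_def)
              then show "L i \<inter> L j = {}" using LP ij by blast
            qed
          qed
          also have "\<dots> = (\<Sum>C\<in>CC. t - s)" using LP by simp
          finally show ?thesis using CC by simp
        qed
        have d1: "(U \<inter> \<Union>CC) \<inter> M = {}" using M by blast
        have d2: "((U \<inter> \<Union>CC) \<union> M) \<inter> \<Union>(L ` CC) = {}"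
          using MU LsubC by blast
        have finUC: "finite (U \<inter> \<Union>CC)" using finU by simp
        have "card T0 = card (U \<inter> \<Union>CC) + card M + card (\<Union>(L ` CC))"
          unfolding T0_def using d1 d2 finUC M finL CC
          by (simp add: card_Un_disjoint)
        then have "w \<le> card T0" using cardUC M cardL wb' st by simp
        then obtain T where T: "T \<subseteq> T0" "card T = w" "finite T"
          by (rule obtain_subset_with_card_n)
        have T0U: "T0 \<subseteq> U \<union> \<Union>CC" unfolding T0_def using MU LsubC by blast
        have TX: "T \<subseteq> X" using T T0U blk UB CCB by blast
        define P0 where "P0 = insert U CC"
        define PU where "PU = CC \<union> g ` M"
        define PC where "PC C = insert U (CC - {C}) \<union> h C ` L C" for C
        have P0: "P0 \<in> Pt t B T"
        proof -
          have "card P0 \<le> Suc s" unfolding P0_def using CC by (simp add: card_insert_if)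
          then show ?thesis using T T0U UB CCB st by (auto simp: Pt_def P0_def)
        qed
        have PU: "PU \<in> Pt t B T"
        proof -
          have "card PU \<le> card CC + card (g ` M)" unfolding PU_def by (rule card_Un_le)
          also have "\<dots> \<le> s + (t - s)" using CC M card_image_le by (metis add_le_mono order_refl)
          finally have c: "card PU \<le> t" using st by simp
          have "PU \<subseteq> B" unfolding PU_def using CCB gP M sub by blast
          moreover have "T \<subseteq> \<Union>PU"
          proof
            fix y assume "y \<in> T"
            then have "y \<in> T0" using T by blast
            then consider "y \<in> \<Union>CC" | "y \<in> M" | C where "C \<in> CC" "y \<in> L C"
              unfolding T0_def by blast
            then show "y \<in> \<Union>PU"
            proof cases
              case 1 then show ?thesis unfolding PU_def by blast
            next
              case 2 then have "y \<in> g y" "g y \<in> PU" using gP MU unfolding PU_def by auto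
              then show ?thesis by blast
            next
              case 3 then show ?thesis using LsubC unfolding PU_def by blast
            qed
          qed
          ultimately show ?thesis using c by (simp add: Pt_def)
        qed
        have PC: "PC C \<in> Pt t B T" if C: "C \<in> CC" for C
        proof -
          have CB': "C \<in> B'" using C CCB' by blast
          have "card (PC C) \<le> card (insert U (CC - {C})) + card (h C ` L C)"
            unfolding PC_def by (rule card_Un_le)
          also have "card (insert U (CC - {C})) \<le> Suc (card (CC - {C}))" using CC by (simp add: card_insert_if)
          also have "card (CC - {C}) = s - 1" using CC C by simp
          also have "card (h C ` L C) \<le> card (L C)" using finL[OF C] by (rule card_image_le)
          finally have c: "card (PC C) \<le> t" using LP[OF C] s1 st by linarith
          have "h C ` L C \<subseteq> B'" using hP[OF CB'] LP[OF C] by (auto simp: excl_def)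
          then have "PC C \<subseteq> B" unfolding PC_def using UB CCB sub by blast
          moreover have "T \<subseteq> \<Union>(PC C)"
          proof
            fix y assume "y \<in> T"
            then have y: "y \<in> T0" using T by blast
            show "y \<in> \<Union>(PC C)"
            proof (cases "y \<in> L C")
              case True
              then have "y \<in> C" using LP[OF C] by (auto simp: excl_def)
              then show ?thesis using hP[OF CB'] True unfolding PC_def by blast
            next
              case False
              from y consider "y \<in> U" | C' where "C' \<in> CC" "y \<in> L C'"
                unfolding T0_def using MU by blast
              then show ?thesis
              proof cases
                case 1 then show ?thesis unfolding PC_def by blast
              next
                case 2
                then have "C' \<noteq> C" using False by blast
                then have "C' \<in> PC C" unfolding PC_def using 2 by blast
                then show ?thesis using 2 LsubC by blast
              qed
            qed
          qed
          ultimately show ?thesis using c by (simp add: Pt_def)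
        qed
        have "Pt t B T = {} \<or> \<Inter>(Pt t B T) \<noteq> {}" using ipps TX T by (auto simp: is_IPPS_def)
        then obtain D where D: "D \<in> \<Inter>(Pt t B T)" using P0 by blast
        have "D \<in> P0" "D \<in> PU" "\<And>C. C \<in> CC \<Longrightarrow> D \<in> PC C" using D P0 PU PC by auto
        then show False
        proof -
          assume a: "D \<in> P0" "D \<in> PU" "\<And>C. C \<in> CC \<Longrightarrow> D \<in> PC C"
          show False
          proof (cases "D = U")
            case True then show False using a(2) UCC gP MU unfolding PU_def by blast
          next
            case False
            then have DC: "D \<in> CC" using a(1) unfolding P0_def by blast
            have "D \<notin> h D ` L D"
            proof
              assume "D \<in> h D ` L D"
              then obtain y where y: "y \<in> L D" "D = h D y" by blast
              then have "y \<in> D" using LsubC DC by blast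
              then have "h D y \<noteq> D" using hP[of D y] CCB' DC by blast
              then show False using y by simp
            qed
            then show False using a(3)[OF DC] UCC DC False unfolding PC_def by blast
          qed
        qed
      qed
    qed
  qed
qed



lemma upper:
  assumes ipps: "is_IPPS t w v X B" and t2: "2 \<le> t"
    and wb: "w \<le> t + (t div 2) * (t - t div 2)"
  shows "card B \<le> v"
proof -
  have finX: "finite X" and cX: "card X = v" and blk: "\<And>A. A \<in> B \<Longrightarrow> A \<subseteq> X"
    using ipps by (auto simp: is_IPPS_def set_system_def)
  have BP: "B \<subseteq> Pow X" using blk by blast
  then have finB: "finite B" using finX by (meson finite_Pow_iff finite_subset)
  have "card B \<le> card (\<Union>B)"
  proof (rule count_private[OF finB])
    show "\<forall>A\<in>B. finite A" using blk finX by (meson finite_subset)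
    show "\<forall>G\<subseteq>B. G \<noteq> {} \<longrightarrow> (\<exists>A\<in>G. \<exists>x\<in>A. \<forall>C\<in>G. C \<noteq> A \<longrightarrow> x \<notin> C)"
    proof (intro allI impI)
      fix G assume "G \<subseteq> B" "G \<noteq> {}"
      then show "\<exists>A\<in>G. \<exists>x\<in>A. \<forall>C\<in>G. C \<noteq> A \<longrightarrow> x \<notin> C"
        by (rule private_exists[OF ipps t2 wb])
    qed
  qed
  also have "\<dots> \<le> card X" using blk finX by (intro card_mono) auto
  finally show ?thesis using cX by simp
qed

lemma lower:
  fixes w v :: nat
  assumes "2 \<le> w" "w \<le> v"
  shows "is_IPPS t w v {0..<v} ((\<lambda>x. insert x {0..<w-1}) ` {w-1..<v})"
    and "card ((\<lambda>x. insert x {0..<w-1}) ` {w-1..<v}) = v - w + 1"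
proof -
  let ?S = "{0..<w-1}"
  let ?B = "(\<lambda>x. insert x ?S) ` {w-1..<v}"
  have inj: "inj_on (\<lambda>x. insert x ?S) {w-1..<v}"
  proof
    fix x y assume "x \<in> {w-1..<v}" "y \<in> {w-1..<v}" "insert x ?S = insert y ?S"
    then have "x \<in> insert y ?S" "x \<ge> w - 1" by auto
    then show "x = y" by auto
  qed
  show "card ?B = v - w + 1" using card_image[OF inj] assms by simp
  have ss: "set_system w v {0..<v} ?B"
    unfolding set_system_def
  proof (intro conjI ballI)
    fix A assume "A \<in> ?B"
    then obtain x where x: "x \<in> {w-1..<v}" "A = insert x ?S" by blast
    then show "A \<subseteq> {0..<v}" using assms by auto
    have "x \<notin> ?S" using x by simp
    then show "card A = w" using x assms by simp
  qed auto
  show "is_IPPS t w v {0..<v} ?B"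
    unfolding is_IPPS_def
  proof (intro conjI allI impI ss)
    fix T assume T: "T \<subseteq> {0..<v} \<and> card T = w"
    have "\<not> T \<subseteq> ?S"
    proof
      assume "T \<subseteq> ?S"
      then have "card T \<le> w - 1" using card_mono[of ?S T] by simp
      then show False using T assms by simp
    qed
    then obtain x where x: "x \<in> T" "x \<notin> ?S" by blast
    then have xr: "x \<in> {w-1..<v}" using T by auto
    have "insert x ?S \<in> \<Inter>(Pt t ?B T)"
    proof
      fix P assume "P \<in> Pt t ?B T"
      then have P: "P \<subseteq> ?B" "T \<subseteq> \<Union>P" by (auto simp: Pt_def)
      then obtain A where A: "A \<in> P" "x \<in> A" using x by blast
      then obtain y where "A = insert y ?S" using P by blast
      with A x have "A = insert x ?S" by auto
      then show "insert x ?S \<in> P" using A by simp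
    qed
    then show "Pt t ?B T = {} \<or> \<Inter>(Pt t ?B T) \<noteq> {}" by blast
  qed
qed

theorem corollary3:
  fixes t w v :: nat
  assumes "2 \<le> w" and "w \<le> v" and "2 \<le> t" and "w \<le> t^2 div 4 + t"
  shows "v - w + 1 \<le> I_t t w v \<and> I_t t w v \<le> v"
proof -
  let ?K = "{card B | (X :: nat set) B. is_IPPS t w v X B}"
  have wb: "w \<le> t + (t div 2) * (t - t div 2)" using assms(4) sq_div[of t] by simp
  have bnd: "k \<le> v" if "k \<in> ?K" for k
  proof -
    from that obtain X :: "nat set" and B where "k = card B" "is_IPPS t w v X B" by blast
    then show ?thesis using upper[OF _ assms(3) wb] by simp
  qed
  have "?K \<subseteq> {..v}" using bnd by auto
  then have finK: "finite ?K" by (rule finite_subset) simp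
  have mem: "v - w + 1 \<in> ?K" 
  proof -
    have "is_IPPS t w v {0..<v} ((\<lambda>x. insert x {0..<w-1}) ` {w-1..<v})"
      "card ((\<lambda>x. insert x {0..<w-1}) ` {w-1..<v}) = v - w + 1"
      using lower[OF assms(1,2)] by auto
    then show ?thesis by (metis (mono_tags, lifting) mem_Collect_eq)
  qed
  have "v - w + 1 \<le> Max ?K" using Max_ge[OF finK mem] .
  moreover have "Max ?K \<le> v" using bnd finK mem by (subst Max_le_iff) auto
  ultimately show ?thesis unfolding I_t_def by simp
qed

end
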